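(* Let $p\in\mathbb N$ and let $P(p)$ be the set of partitions of $\{1,\ldots,p\}$. For $\pi\in P(p)$ and $x\in\mathbb C^n$ (indexed by $\mathbb Z/n\mathbb Z$) put $f_\pi(x)=\sum_{i\in\pi}x_{i_1}\cdots x_{i_p}$ and $g_\pi(x)=\sum_{i\vdash\pi}x_{i_1}\cdots x_{i_p}$, the sums being over multi-indices $i=(i_1,\ldots,i_p)\in(\mathbb Z/n\mathbb Z)^p$. Then the duality map $\Phi$ maps the set $$X_p=\{(x_{j-i})\in C^{circ}_n(\infty)\mid f_\pi(x),g_\pi(x)\in\mathbb R\ \text{for all }\pi\in P(p)\}$$ bijectively onto itself (here $x$ denotes the first row).
   Context: For a partition $\pi$ of $\{1,\ldots,p\}$ and a multi-index $i=(i_1,\ldots,i_p)$, write $i\in\pi$ if $a\sim_\pi b$ implies $i_a=i_b$, and write $i\vdash\pi$ if $\sum_{r\in\beta}i_r=0$ in $\mathbb Z/n\mathbb Z$ for every block $\beta$ of $\pi$. $C^{circ}_n(\infty)$ is the set of $n\times n$ circulant complex Hadamard matrices ($H_{ij}=x_{j-i}$, $|x_k|=1$, $H/\sqrt n$ unitary). $F=(w^{ij}/\sqrt n)_{i,j=0}^{n-1}$ with $w=e^{2\pi i/n}$, and $\Phi((x_{j-i})_{ij})=((Fx)_{j-i})_{ij}$, a bijection of $C^{circ}_n(\infty)$ onto itself. *)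

theory Defs
  imports Complex_Main "HOL-Library.Disjoint_Sets"
begin

text \<open>Indices of Z/nZ are represented by 0..<n; matrices by functions nat => nat => complex,
  set to 0 outside the index range {0..<n} x {0..<n} (so equality of matrices is exact).\<close>

definition circ_matrix :: "nat \<Rightarrow> (nat \<Rightarrow> complex) \<Rightarrow> (nat \<Rightarrow> nat \<Rightarrow> complex)" where
  "circ_matrix n x = (\<lambda>i j. if i < n \<and> j < n then x ((j + n - i) mod n) else 0)"

definition circ_hadamard :: "nat \<Rightarrow> (nat \<Rightarrow> nat \<Rightarrow> complex) set" where
  "circ_hadamard n = {H. \<exists>x. H = circ_matrix n x \<and> (\<forall>k<n. cmod (x k) = 1)
      \<and> (\<forall>i<n. \<forall>j<n. (\<Sum>k<n. (H i k / of_real (sqrt n)) * cnj (H j k / of_real (sqrt n)))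
            = (if i = j then 1 else 0))}"

definition fourier :: "nat \<Rightarrow> (nat \<Rightarrow> complex) \<Rightarrow> (nat \<Rightarrow> complex)" where
  "fourier n x = (\<lambda>k. (\<Sum>l<n. cis (2 * pi / n) ^ (k * l) * x l) / of_real (sqrt n))"

definition duality_map :: "nat \<Rightarrow> (nat \<Rightarrow> nat \<Rightarrow> complex) \<Rightarrow> (nat \<Rightarrow> nat \<Rightarrow> complex)" where
  "duality_map n H = circ_matrix n (fourier n (\<lambda>k. H 0 k))"

definition set_partitions :: "nat \<Rightarrow> nat set set set" where
  "set_partitions p = {\<pi>. partition_on {1..p} \<pi>}"

definition multi_indices :: "nat \<Rightarrow> nat \<Rightarrow> (nat \<Rightarrow> nat) set" where
  "multi_indices n p = PiE {1..p} (\<lambda>_. {0..<n})"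

definition idx_in :: "(nat \<Rightarrow> nat) \<Rightarrow> nat set set \<Rightarrow> bool" where
  "idx_in i \<pi> \<longleftrightarrow> (\<forall>\<beta>\<in>\<pi>. \<forall>a\<in>\<beta>. \<forall>b\<in>\<beta>. i a = i b)"

definition idx_vdash :: "nat \<Rightarrow> (nat \<Rightarrow> nat) \<Rightarrow> nat set set \<Rightarrow> bool" where
  "idx_vdash n i \<pi> \<longleftrightarrow> (\<forall>\<beta>\<in>\<pi>. (\<Sum>r\<in>\<beta>. i r) mod n = 0)"

definition f_pi :: "nat \<Rightarrow> nat \<Rightarrow> nat set set \<Rightarrow> (nat \<Rightarrow> complex) \<Rightarrow> complex" where
  "f_pi n p \<pi> x = (\<Sum>i\<in>{i\<in>multi_indices n p. idx_in i \<pi>}. \<Prod>r\<in>{1..p}. x (i r))"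

definition g_pi :: "nat \<Rightarrow> nat \<Rightarrow> nat set set \<Rightarrow> (nat \<Rightarrow> complex) \<Rightarrow> complex" where
  "g_pi n p \<pi> x = (\<Sum>i\<in>{i\<in>multi_indices n p. idx_vdash n i \<pi>}. \<Prod>r\<in>{1..p}. x (i r))"

definition X_set :: "nat \<Rightarrow> nat \<Rightarrow> (nat \<Rightarrow> nat \<Rightarrow> complex) set" where
  "X_set n p = {H \<in> circ_hadamard n. \<forall>\<pi>\<in>set_partitions p.
      f_pi n p \<pi> (\<lambda>k. H 0 k) \<in> \<real> \<and> g_pi n p \<pi> (\<lambda>k. H 0 k) \<in> \<real>}"

end

theory Submission
  imports Defs
begin

definition ee :: "nat \<Rightarrow> int \<Rightarrow> complex" where
  "ee n t = cis (2 * pi * of_int t / real n)"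

lemma ee_add: "ee n (a + b) = ee n a * ee n b"
  by (simp add: ee_def cis_mult add_divide_distrib distrib_left)

lemma ee_0[simp]: "ee n 0 = 1"
  by (simp add: ee_def)

lemma ee_neg: "ee n (- a) = cnj (ee n a)"
  by (simp add: ee_def cis_cnj)

lemma cnj_ee: "cnj (ee n a) = ee n (- a)"
  by (simp add: ee_neg)

lemma norm_ee[simp]: "norm (ee n a) = 1"
  by (simp add: ee_def)

lemma ee_mult_n: "n \<ge> 1 \<Longrightarrow> ee n (int n * c) = 1"
proof -
  assume "n \<ge> 1"
  hence "2 * pi * of_int (int n * c) / real n = 2 * pi * real_of_int c" by simp
  thus ?thesis unfolding ee_def by (simp add: cis_multiple_2pi)
qed

lemma ee_periodic: assumes "n \<ge> 1" "a mod int n = b mod int n" shows "ee n a = ee n b"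
proof -
  have e1: "a = int n * (a div int n) + a mod int n" by simp
  have e2: "b = int n * (b div int n) + b mod int n" by simp
  have "a = b + (int n * (a div int n) - int n * (b div int n))" using e1 e2 assms(2) by linarith
  hence "a = b + int n * (a div int n - b div int n)" by (simp add: right_diff_distrib)
  hence "ee n a = ee n b * ee n (int n * (a div int n - b div int n))"
    using ee_add by metis
  thus ?thesis using ee_mult_n[OF assms(1)] by simp
qed

lemma ee_mod_mult: "n \<ge> 1 \<Longrightarrow> ee n ((a mod int n) * b) = ee n (a * b)"
  by (rule ee_periodic) (auto simp: mod_mult_left_eq)

lemma w_pow: "cis (2 * pi / real n) ^ m = ee n (int m)"
  by (simp add: ee_def DeMoivre mult_ac)

lemma ee_pow: "ee n a ^ m = ee n (int m * a)"
  by (simp add: ee_def DeMoivre mult_ac)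

lemma ee_eq_1: assumes "n \<ge> 1" "ee n a = 1" shows "int n dvd a"
proof -
  have "ee n (a mod int n) = 1" using ee_periodic[OF assms(1), of "a mod int n" a] assms by simp
  moreover have "0 \<le> a mod int n" "a mod int n < int n" using assms by auto
  ultimately obtain k where k: "k < n" "int k = a mod int n" "ee n (int k) = 1"
    by (metis nonneg_int_cases of_nat_less_iff)
  have inj: "inj_on (\<lambda>k. cis (2 * pi * real k / real n)) {..<n}"
    using bij_betw_roots_unity[of n] assms(1) by (auto simp: bij_betw_def)
  have "cis (2 * pi * real k / real n) = cis (2 * pi * real 0 / real n)"
    using k(3) by (simp add: ee_def)
  hence "k = 0" using inj_onD[OF inj] k(1) assms(1) by force
  thus ?thesis using k(2) by (simp add: dvd_eq_mod_eq_0)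
qed

lemma ee_sum: assumes "n \<ge> 1"
  shows "(\<Sum>j<n. ee n (int j * s)) = (if int n dvd s then of_nat n else 0)"
proof (cases "int n dvd s")
  case True
  then obtain c where "s = int n * c" by blast
  hence "ee n (int j * s) = 1" for j using ee_mult_n[OF assms, of "int j * c"] by (simp add: mult_ac)
  thus ?thesis using True by simp
next
  case False
  hence ne: "ee n s \<noteq> 1" using ee_eq_1[OF assms] by blast
  have "(\<Sum>j<n. ee n (int j * s)) = (\<Sum>j<n. ee n s ^ j)" by (simp add: ee_pow)
  also have "\<dots> = (ee n s ^ n - 1) / (ee n s - 1)" by (rule geometric_sum[OF ne])
  also have "ee n s ^ n = 1" using ee_mult_n[OF assms] by (simp add: ee_pow)
  finally show ?thesis using False by simp
qed

lemma int_shift_mod: fixes k n i :: nat shows "i < n \<Longrightarrow> int ((k + n - i) mod n) = (int k - int i) mod int n"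
proof -
  assume a: "i < n"
  have e: "int (k+n-i) = (int k - int i) + int n" using a by linarith
  have "int ((k+n-i) mod n) = int (k+n-i) mod int n" by (rule of_nat_mod)
  also have "\<dots> = ((int k - int i) + int n) mod int n" by (simp only: e)
  also have "\<dots> = (int k - int i) mod int n" by simp
  finally show ?thesis .
qed

lemma refl_inv: fixes k n a :: nat assumes "k < n" "a < n"
  shows "(k + n - (k + n - a) mod n) mod n = a"
proof -
  have "int ((k + n - (k + n - a) mod n) mod n) = (int k - (int k - int a) mod int n) mod int n"
    using assms by (simp add: int_shift_mod)
  also have "\<dots> = (int k - (int k - int a)) mod int n" by (simp add: mod_diff_right_eq)
  also have "\<dots> = int a" using assms by simp
  finally show ?thesis by linarith
qed

lemma refl_sum: fixes k n :: nat assumes "k < n"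
  shows "(\<Sum>i<n. g ((k + n - i) mod n)) = (\<Sum>i<n. g i)"
  by (rule sum.reindex_bij_witness[where i="\<lambda>i. (k + n - i) mod n" and j="\<lambda>i. (k + n - i) mod n"])
     (use assms refl_inv in auto)


abbreviation sq :: "nat \<Rightarrow> complex" where "sq n \<equiv> complex_of_real (sqrt (real n))"

lemma sq_sq: "sq n * sq n = of_nat n"
proof -
  have "sqrt (real n) * sqrt (real n) = real n" by simp
  hence "complex_of_real (sqrt (real n) * sqrt (real n)) = complex_of_real (real n)" by simp
  thus ?thesis by (simp only: of_real_mult of_real_of_nat_eq)
qed

lemma sq_nz: "n \<ge> 1 \<Longrightarrow> sq n \<noteq> 0" by simp

lemma cnj_sq[simp]: "cnj (sq n) = sq n" by simp

lemma fourier_ee: "fourier n x k = (\<Sum>l<n. ee n (int k * int l) * x l) / sq n"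
  unfolding fourier_def w_pow by simp

lemma dvd_neg: fixes k l n :: nat assumes "k < n" "l < n"
  shows "(int n dvd int k + int l) = (l = (n - k) mod n)"
proof -
  have "(int n dvd int k + int l) = (n dvd k + l)"
    by (metis of_nat_add of_nat_dvd_iff)
  also have "\<dots> = (l = (n - k) mod n)"
  proof (cases "k = 0")
    case True thus ?thesis using assms by (auto dest: nat_dvd_not_less)
  next
    case False
    hence m: "(n - k) mod n = n - k" using assms by simp
    show ?thesis
    proof
      assume "n dvd k + l"
      then obtain c where c: "k + l = n * c" by blast
      have "c \<noteq> 0" using c False by (metis add_is_0 mult_0_right)
      moreover have "n * c < n * 2" using c assms by linarith
      hence "c < 2" by simp
      ultimately have "c = 1" by linarith
      thus "l = (n - k) mod n" using c m by simp
    next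
      assume "l = (n - k) mod n"
      thus "n dvd k + l" using m assms by simp
    qed
  qed
  finally show ?thesis .
qed

lemma FF: assumes n: "n \<ge> 1" and k: "k < n"
  shows "fourier n (fourier n x) k = x ((n - k) mod n)"
proof -
  have "fourier n (fourier n x) k = (\<Sum>m<n. ee n (int k * int m) * ((\<Sum>l<n. ee n (int m * int l) * x l) / sq n)) / sq n"
    by (simp add: fourier_ee)
  also have "\<dots> = (\<Sum>m<n. \<Sum>l<n. x l * ee n (int m * (int k + int l))) / (sq n * sq n)"
    by (simp add: sum_distrib_left sum_divide_distrib ee_add[symmetric] algebra_simps)
  also have "\<dots> = (\<Sum>l<n. x l * (\<Sum>m<n. ee n (int m * (int k + int l)))) / of_nat n"
    by (subst sum.swap) (simp add: sq_sq sum_distrib_left)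
  also have "\<dots> = (\<Sum>l<n. (if l = (n - k) mod n then x l * of_nat n else 0)) / of_nat n"
    using n k by (intro arg_cong2[where f="(/)"] sum.cong refl) (auto simp: ee_sum dvd_neg)
  also have "\<dots> = x ((n - k) mod n)"
    using n by (simp add: sum.delta')
  finally show ?thesis .
qed


lemma ee_mult_mod: "n \<ge> 1 \<Longrightarrow> ee n (b * (a mod int n)) = ee n (b * a)"
  by (rule ee_periodic) (auto simp: mod_mult_right_eq)

definition unimod :: "nat \<Rightarrow> (nat \<Rightarrow> complex) \<Rightarrow> bool" where
  "unimod n x \<longleftrightarrow> (\<forall>k<n. cmod (x k) = 1)"

definition orth :: "nat \<Rightarrow> (nat \<Rightarrow> complex) \<Rightarrow> bool" where
  "orth n x \<longleftrightarrow> (\<forall>i<n. \<forall>j<n. (\<Sum>k<n. x ((k + n - i) mod n) * cnj (x ((k + n - j) mod n)))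
      = (if i = j then of_nat n else 0))"

lemma triple_swap: "(\<Sum>k\<in>A. \<Sum>l\<in>B. \<Sum>m\<in>C. f k l m) = (\<Sum>l\<in>B. \<Sum>m\<in>C. \<Sum>k\<in>A. f k l m)"
proof -
  have "(\<Sum>k\<in>A. \<Sum>l\<in>B. \<Sum>m\<in>C. f k l m) = (\<Sum>l\<in>B. \<Sum>k\<in>A. \<Sum>m\<in>C. f k l m)" by (rule sum.swap)
  also have "\<dots> = (\<Sum>l\<in>B. \<Sum>m\<in>C. \<Sum>k\<in>A. f k l m)" by (rule sum.cong[OF refl], rule sum.swap)
  finally show ?thesis .
qed

lemma dvd_diff_small: fixes l l' n :: nat assumes "l < n" "l' < n"
  shows "(int n dvd int l - int l') = (l = l')"
proof -
  have "(int n dvd int l - int l') = (int l mod int n = int l' mod int n)"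
    by (simp add: mod_eq_dvd_iff)
  also have "\<dots> = (int l = int l')" using assms by simp
  finally show ?thesis by simp
qed

lemma autocorr_F: assumes n: "n \<ge> 1" and i: "i < n" and j: "j < n"
  shows "(\<Sum>k<n. fourier n x ((k + n - i) mod n) * cnj (fourier n x ((k + n - j) mod n)))
    = (\<Sum>l<n. ee n (int l * (int j - int i)) * (x l * cnj (x l)))"
proof -
  have y1: "fourier n x ((k + n - i) mod n) = (\<Sum>l<n. ee n ((int k - int i) * int l) * x l) / sq n" for k
    using n i by (simp add: fourier_ee int_shift_mod ee_mod_mult)
  have y2: "cnj (fourier n x ((k + n - j) mod n)) = (\<Sum>l<n. ee n (- ((int k - int j) * int l)) * cnj (x l)) / sq n" for k
    using n j by (simp add: fourier_ee int_shift_mod ee_mod_mult cnj_ee)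
  have "(\<Sum>k<n. fourier n x ((k + n - i) mod n) * cnj (fourier n x ((k + n - j) mod n)))
     = (\<Sum>k<n. \<Sum>l<n. \<Sum>l'<n. (x l * cnj (x l') * ee n (int j * int l' - int i * int l)) * ee n (int k * (int l - int l'))) / of_nat n"
    unfolding y1 y2
    by (simp add: sum_product sum_divide_distrib sq_sq[symmetric] ee_add[symmetric] algebra_simps)
  also have "\<dots> = (\<Sum>l<n. \<Sum>l'<n. (x l * cnj (x l') * ee n (int j * int l' - int i * int l)) * (\<Sum>k<n. ee n (int k * (int l - int l')))) / of_nat n"
    by (subst triple_swap) (simp add: sum_distrib_left)
  also have "\<dots> = (\<Sum>l<n. \<Sum>l'<n. if l' = l then (x l * cnj (x l) * ee n (int j * int l - int i * int l)) * of_nat n else 0) / of_nat n"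
    using n by (intro arg_cong2[where f="(/)"] sum.cong refl) (auto simp: ee_sum dvd_diff_small)
  also have "\<dots> = (\<Sum>l<n. ee n (int l * (int j - int i)) * (x l * cnj (x l)))"
    using n by (simp add: sum_divide_distrib algebra_simps)
  finally show ?thesis .
qed


lemma orth_F: assumes n: "n \<ge> 1" and u: "unimod n x" shows "orth n (fourier n x)"
  unfolding orth_def
proof (intro allI impI)
  fix i j assume i: "i < n" and j: "j < n"
  have xx: "x l * cnj (x l) = 1" if "l < n" for l
    using u that unfolding unimod_def by (simp add: complex_norm_square[symmetric])
  have "(\<Sum>k<n. fourier n x ((k + n - i) mod n) * cnj (fourier n x ((k + n - j) mod n)))
    = (\<Sum>l<n. ee n (int l * (int j - int i)))"
    using autocorr_F[OF n i j, of x] xx by simp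
  also have "\<dots> = (if i = j then of_nat n else 0)"
    using n i j by (simp add: ee_sum dvd_diff_small)
  finally show "(\<Sum>k<n. fourier n x ((k + n - i) mod n) * cnj (fourier n x ((k + n - j) mod n)))
    = (if i = j then of_nat n else 0)" .
qed

lemma unimod_F: assumes n: "n \<ge> 1" and o: "orth n x" shows "unimod n (fourier n x)"
  unfolding unimod_def
proof (intro allI impI)
  fix m assume m: "m < n"
  define P where "P = (\<Sum>l<n. ee n (int m * int l) * x l)"
  have yP: "fourier n x m = P / sq n" by (simp add: fourier_ee P_def)
  have cP: "cnj P = (\<Sum>k<n. ee n (- (int m * int k)) * cnj (x k))"
    by (simp add: P_def cnj_ee)
  have Pk: "P = (\<Sum>i<n. ee n (int m * (int k - int i)) * x ((k + n - i) mod n))" if k: "k < n" for k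
  proof -
    have "P = (\<Sum>i<n. ee n (int m * int ((k + n - i) mod n)) * x ((k + n - i) mod n))"
      unfolding P_def by (rule refl_sum[OF k, symmetric])
    also have "\<dots> = (\<Sum>i<n. ee n (int m * (int k - int i)) * x ((k + n - i) mod n))"
      using n by (intro sum.cong refl) (simp add: int_shift_mod ee_mult_mod)
    finally show ?thesis .
  qed
  have "P * (\<Sum>k<n. ee n (- (int m * int k)) * cnj (x k))
     = (\<Sum>k<n. \<Sum>i<n. ee n (- (int m * int i)) * (x ((k + n - i) mod n) * cnj (x ((k + n - 0) mod n))))"
  proof -
    have "P * (\<Sum>k<n. ee n (- (int m * int k)) * cnj (x k)) = (\<Sum>k<n. ee n (- (int m * int k)) * cnj (x k) * P)"
      by (simp add: sum_distrib_left mult_ac)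
    also have "\<dots> = (\<Sum>k<n. ee n (- (int m * int k)) * cnj (x k) * (\<Sum>i<n. ee n (int m * (int k - int i)) * x ((k + n - i) mod n)))"
      by (intro sum.cong refl) (simp add: Pk)
    also have "\<dots> = (\<Sum>k<n. \<Sum>i<n. ee n (- (int m * int i)) * (x ((k + n - i) mod n) * cnj (x ((k + n - 0) mod n))))"
      by (intro sum.cong refl) (simp add: sum_distrib_left ee_add[symmetric] algebra_simps)
    finally show ?thesis .
  qed
  also have "\<dots> = (\<Sum>i<n. ee n (- (int m * int i)) * (\<Sum>k<n. x ((k + n - i) mod n) * cnj (x ((k + n - 0) mod n))))"
    by (subst sum.swap) (simp add: sum_distrib_left)
  also have "\<dots> = (\<Sum>i<n. if i = 0 then of_nat n else 0)"
  proof (intro sum.cong refl)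
    fix i assume "i \<in> {..<n}"
    hence i: "i < n" by simp
    have "(\<Sum>k<n. x ((k + n - i) mod n) * cnj (x ((k + n - 0) mod n))) = (if i = 0 then of_nat n else 0)"
      using o i n unfolding orth_def by blast
    thus "ee n (- (int m * int i)) * (\<Sum>k<n. x ((k + n - i) mod n) * cnj (x ((k + n - 0) mod n))) = (if i = 0 then of_nat n else 0)"
      by simp
  qed
  also have "\<dots> = of_nat n" using n by simp
  finally have "fourier n x m * cnj (fourier n x m) = 1"
    unfolding yP using n by (simp add: cP sq_sq[symmetric])
  hence "complex_of_real ((cmod (fourier n x m))\<^sup>2) = 1" by (simp only: complex_norm_square)
  hence "(cmod (fourier n x m))\<^sup>2 = 1" by (metis of_real_1 of_real_eq_iff)
  thus "cmod (fourier n x m) = 1" by (metis norm_ge_zero power2_eq_1_iff neg_0_le_iff_le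
      le_minus_one_simps(3) order_trans)
qed


lemma had_entry: assumes "i < n" "j < n"
  shows "(\<Sum>k<n. (circ_matrix n x i k / sq n) * cnj (circ_matrix n x j k / sq n))
    = (\<Sum>k<n. x ((k + n - i) mod n) * cnj (x ((k + n - j) mod n))) / of_nat n"
  using assms by (simp add: circ_matrix_def sum_divide_distrib sq_sq[symmetric])

lemma had_E: assumes n: "n \<ge> 1" and H: "H \<in> circ_hadamard n"
  obtains x where "H = circ_matrix n x" "unimod n x" "orth n x"
proof -
  from H obtain x where x: "H = circ_matrix n x" "\<forall>k<n. cmod (x k) = 1"
    "\<forall>i<n. \<forall>j<n. (\<Sum>k<n. (H i k / sq n) * cnj (H j k / sq n)) = (if i = j then 1 else 0)"
    unfolding circ_hadamard_def by blast
  have "orth n x" unfolding orth_def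
  proof (intro allI impI)
    fix i j assume i: "i < n" and j: "j < n"
    have "(\<Sum>k<n. (circ_matrix n x i k / sq n) * cnj (circ_matrix n x j k / sq n)) = (if i = j then 1 else 0)"
      using x(3) i j unfolding x(1) by blast
    hence e: "(\<Sum>k<n. x ((k + n - i) mod n) * cnj (x ((k + n - j) mod n))) / of_nat n = (if i = j then 1 else 0)"
      by (simp only: had_entry[OF i j])
    have nz: "(of_nat n :: complex) \<noteq> 0" using n by simp
    have "(\<Sum>k<n. x ((k + n - i) mod n) * cnj (x ((k + n - j) mod n)))
       = (\<Sum>k<n. x ((k + n - i) mod n) * cnj (x ((k + n - j) mod n))) / of_nat n * of_nat n"
      using nz by simp
    also have "\<dots> = (if i = j then of_nat n else 0)" by (simp only: e) simp
    finally show "(\<Sum>k<n. x ((k + n - i) mod n) * cnj (x ((k + n - j) mod n))) = (if i = j then of_nat n else 0)" .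
  qed
  moreover have "unimod n x" using x(2) unfolding unimod_def by blast
  ultimately show ?thesis using that x(1) by blast
qed

lemma had_I: assumes n: "n \<ge> 1" and u: "unimod n x" and o: "orth n x"
  shows "circ_matrix n x \<in> circ_hadamard n"
proof -
  have A: "\<forall>k<n. cmod (x k) = 1" using u unfolding unimod_def by blast
  have B: "\<forall>i<n. \<forall>j<n. (\<Sum>k<n. (circ_matrix n x i k / sq n) * cnj (circ_matrix n x j k / sq n)) = (if i = j then 1 else 0)"
  proof (intro allI impI)
    fix i j assume i: "i < n" and j: "j < n"
    show "(\<Sum>k<n. (circ_matrix n x i k / sq n) * cnj (circ_matrix n x j k / sq n)) = (if i = j then 1 else 0)"
      unfolding had_entry[OF i j] using o i j n unfolding orth_def by simp
  qed
  show ?thesis unfolding circ_hadamard_def using A B by blast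
qed

lemma fourier_cong: "(\<And>k. k < n \<Longrightarrow> x k = y k) \<Longrightarrow> fourier n x = fourier n y"
  unfolding fourier_def by (intro ext arg_cong2[where f="(/)"] sum.cong refl) auto

lemma circ_cong: "(\<And>k. k < n \<Longrightarrow> x k = y k) \<Longrightarrow> circ_matrix n x = circ_matrix n y"
  unfolding circ_matrix_def by (intro ext) auto

lemma circ_row0: "n \<ge> 1 \<Longrightarrow> k < n \<Longrightarrow> circ_matrix n x 0 k = x k"
  by (simp add: circ_matrix_def)

lemma dual_circ: "n \<ge> 1 \<Longrightarrow> duality_map n (circ_matrix n x) = circ_matrix n (fourier n x)"
  unfolding duality_map_def by (intro arg_cong[where f="circ_matrix n"] fourier_cong) (simp add: circ_row0)

lemma dual_had: assumes n: "n \<ge> 1" and H: "H \<in> circ_hadamard n"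
  shows "duality_map n H \<in> circ_hadamard n"
proof -
  obtain x where x: "H = circ_matrix n x" "unimod n x" "orth n x" using had_E[OF n H] by blast
  show ?thesis unfolding x(1) dual_circ[OF n]
    by (rule had_I[OF n unimod_F[OF n x(3)] orth_F[OF n x(2)]])
qed

lemma FFFF: assumes n: "n \<ge> 1" and k: "k < n"
  shows "fourier n (fourier n (fourier n (fourier n x))) k = x k"
proof -
  have "fourier n (fourier n (fourier n (fourier n x))) k = fourier n (fourier n x) ((n - k) mod n)"
    by (rule FF[OF n k])
  also have "\<dots> = x ((n - (n - k) mod n) mod n)"
    using n by (intro FF) auto
  also have "(n - (n - k) mod n) mod n = k" using refl_inv[of 0 n k] n k by simp
  finally show ?thesis .
qed

lemma dual4: assumes n: "n \<ge> 1" and H: "H \<in> circ_hadamard n"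
  shows "duality_map n (duality_map n (duality_map n (duality_map n H))) = H"
proof -
  obtain x where x: "H = circ_matrix n x" using had_E[OF n H] by blast
  show ?thesis unfolding x dual_circ[OF n] using FFFF[OF n] by (intro circ_cong) auto
qed


definition blk :: "nat set set \<Rightarrow> nat \<Rightarrow> nat set" where
  "blk \<pi> r = (THE \<beta>. \<beta> \<in> \<pi> \<and> r \<in> \<beta>)"

lemma blk_eq: assumes P: "partition_on U \<pi>" and b: "\<beta> \<in> \<pi>" "r \<in> \<beta>"
  shows "blk \<pi> r = \<beta>"
  unfolding blk_def
proof (rule the_equality)
  show "\<beta> \<in> \<pi> \<and> r \<in> \<beta>" using b by blast
  fix \<gamma> assume "\<gamma> \<in> \<pi> \<and> r \<in> \<gamma>"
  thus "\<gamma> = \<beta>" using partition_onD2[OF P] b disjointD by blast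
qed

lemma blk_in: assumes P: "partition_on U \<pi>" and r: "r \<in> U"
  shows "blk \<pi> r \<in> \<pi>" "r \<in> blk \<pi> r"
proof -
  obtain \<beta> where "\<beta> \<in> \<pi>" "r \<in> \<beta>" using partition_onD1[OF P] r by blast
  thus "blk \<pi> r \<in> \<pi>" "r \<in> blk \<pi> r" using blk_eq[OF P] by auto
qed

lemma factor_in:
  fixes h :: "nat \<Rightarrow> nat \<Rightarrow> complex"
  assumes P: "partition_on {1..p} \<pi>"
  shows "(\<Sum>i\<in>{i\<in>multi_indices n p. idx_in i \<pi>}. \<Prod>r\<in>{1..p}. h r (i r))
       = (\<Prod>\<beta>\<in>\<pi>. \<Sum>c<n. \<Prod>r\<in>\<beta>. h r c)"
proof -
  have U: "\<Union>\<pi> = {1..p}" using partition_onD1[OF P] by simp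
  have fin\<pi>: "finite \<pi>" using U by (metis finite_UnionD finite_atLeastAtMost)
  have finb: "\<And>\<beta>. \<beta> \<in> \<pi> \<Longrightarrow> finite \<beta>" using U by (metis Union_upper finite_atLeastAtMost finite_subset)
  have ne: "\<And>\<beta>. \<beta> \<in> \<pi> \<Longrightarrow> \<beta> \<noteq> {}" using partition_onD3[OF P] by blast
  have sub: "\<And>\<beta>. \<beta> \<in> \<pi> \<Longrightarrow> \<beta> \<subseteq> {1..p}" using U by blast
  have disj: "\<forall>A\<in>\<pi>. \<forall>B\<in>\<pi>. A \<noteq> B \<longrightarrow> A \<inter> B = {}"
    using partition_onD2[OF P] disjointD by blast
  have "(\<Prod>\<beta>\<in>\<pi>. \<Sum>c<n. \<Prod>r\<in>\<beta>. h r c) = (\<Sum>C\<in>PiE \<pi> (\<lambda>_. {..<n}). \<Prod>\<beta>\<in>\<pi>. \<Prod>r\<in>\<beta>. h r (C \<beta>))"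
    by (rule prod_sum_PiE[OF fin\<pi>]) simp
  also have "\<dots> = (\<Sum>i\<in>{i\<in>multi_indices n p. idx_in i \<pi>}. \<Prod>r\<in>{1..p}. h r (i r))"
  proof (rule sum.reindex_bij_witness[where i="\<lambda>i. \<lambda>\<beta>\<in>\<pi>. i (SOME r. r \<in> \<beta>)"
        and j="\<lambda>C. \<lambda>r\<in>{1..p}. C (blk \<pi> r)"])
    fix C assume C: "C \<in> PiE \<pi> (\<lambda>_. {..<n})"
    show "(\<lambda>\<beta>\<in>\<pi>. (\<lambda>r\<in>{1..p}. C (blk \<pi> r)) (SOME r. r \<in> \<beta>)) = C"
    proof (rule ext)
      fix \<beta> show "(\<lambda>\<beta>\<in>\<pi>. (\<lambda>r\<in>{1..p}. C (blk \<pi> r)) (SOME r. r \<in> \<beta>)) \<beta> = C \<beta>"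
      proof (cases "\<beta> \<in> \<pi>")
        case True
        hence s1: "(SOME r. r \<in> \<beta>) \<in> \<beta>" using ne by (simp add: some_in_eq)
        hence s2: "(SOME r. r \<in> \<beta>) \<in> {1..p}" using sub True by blast
        have "blk \<pi> (SOME r. r \<in> \<beta>) = \<beta>" using blk_eq[OF P True s1] .
        thus ?thesis using True s2 by simp
      next
        case False thus ?thesis using C by (auto simp: PiE_def extensional_def)
      qed
    qed
    show "(\<lambda>r\<in>{1..p}. C (blk \<pi> r)) \<in> {i\<in>multi_indices n p. idx_in i \<pi>}"
      unfolding multi_indices_def idx_in_def
    proof (intro CollectI conjI ballI)
      show "(\<lambda>r\<in>{1..p}. C (blk \<pi> r)) \<in> PiE {1..p} (\<lambda>_. {0..<n})"
      proof (rule PiE_I)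
        fix r assume r: "r \<in> {1..p}"
        have "blk \<pi> r \<in> \<pi>" using blk_in[OF P r] by simp
        hence "C (blk \<pi> r) \<in> {..<n}" using C by (auto simp: PiE_iff)
        thus "(\<lambda>r\<in>{1..p}. C (blk \<pi> r)) r \<in> {0..<n}" using r by simp
      qed auto
      fix \<beta> a b assume b: "\<beta> \<in> \<pi>" "a \<in> \<beta>" "b \<in> \<beta>"
      hence "a \<in> {1..p}" "b \<in> {1..p}" using sub by blast+
      moreover have "blk \<pi> a = \<beta>" "blk \<pi> b = \<beta>" using blk_eq[OF P] b by blast+
      ultimately show "(\<lambda>r\<in>{1..p}. C (blk \<pi> r)) a = (\<lambda>r\<in>{1..p}. C (blk \<pi> r)) b" by simp
    qed
    show "(\<Prod>r\<in>{1..p}. h r ((\<lambda>r\<in>{1..p}. C (blk \<pi> r)) r)) = (\<Prod>\<beta>\<in>\<pi>. \<Prod>r\<in>\<beta>. h r (C \<beta>))"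
    proof -
      have "(\<Prod>r\<in>{1..p}. h r ((\<lambda>r\<in>{1..p}. C (blk \<pi> r)) r)) = (\<Prod>r\<in>\<Union>\<pi>. h r (C (blk \<pi> r)))"
        using U by (intro prod.cong) auto
      also have "\<dots> = (\<Prod>\<beta>\<in>\<pi>. \<Prod>r\<in>\<beta>. h r (C (blk \<pi> r)))"
        using finb disj by (simp add: prod.Union_disjoint)
      also have "\<dots> = (\<Prod>\<beta>\<in>\<pi>. \<Prod>r\<in>\<beta>. h r (C \<beta>))"
        using blk_eq[OF P] by (intro prod.cong refl) auto
      finally show ?thesis .
    qed
  next
    fix i assume i: "i \<in> {i\<in>multi_indices n p. idx_in i \<pi>}"
    hence iM: "i \<in> PiE {1..p} (\<lambda>_. {0..<n})" and ii: "idx_in i \<pi>" unfolding multi_indices_def by auto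
    show "(\<lambda>r\<in>{1..p}. (\<lambda>\<beta>\<in>\<pi>. i (SOME r. r \<in> \<beta>)) (blk \<pi> r)) = i"
    proof (rule ext)
      fix r show "(\<lambda>r\<in>{1..p}. (\<lambda>\<beta>\<in>\<pi>. i (SOME r. r \<in> \<beta>)) (blk \<pi> r)) r = i r"
      proof (cases "r \<in> {1..p}")
        case True
        have b: "blk \<pi> r \<in> \<pi>" "r \<in> blk \<pi> r" using blk_in[OF P True] by auto
        hence "(SOME r'. r' \<in> blk \<pi> r) \<in> blk \<pi> r" by (meson someI)
        hence "i (SOME r'. r' \<in> blk \<pi> r) = i r" using ii b unfolding idx_in_def by blast
        thus ?thesis using True b by simp
      next
        case False thus ?thesis using iM by (auto simp: PiE_def extensional_def)
      qed
    qed
    show "(\<lambda>\<beta>\<in>\<pi>. i (SOME r. r \<in> \<beta>)) \<in> PiE \<pi> (\<lambda>_. {..<n})"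
    proof (rule PiE_I)
      fix \<beta> assume b: "\<beta> \<in> \<pi>"
      hence "(SOME r. r \<in> \<beta>) \<in> \<beta>" using ne by (simp add: some_in_eq)
      hence "(SOME r. r \<in> \<beta>) \<in> {1..p}" using sub b by blast
      thus "(\<lambda>\<beta>\<in>\<pi>. i (SOME r. r \<in> \<beta>)) \<beta> \<in> {..<n}" using iM b by (auto simp: PiE_def Pi_def)
    qed simp
  qed
  finally show ?thesis ..
qed


lemma prod_ee: "finite S \<Longrightarrow> (\<Prod>r\<in>S. ee n (f r)) = ee n (\<Sum>r\<in>S. f r)"
  by (induction S rule: finite_induct) (simp_all add: ee_add)

lemma prod_if_const: assumes "finite S"
  shows "(\<Prod>b\<in>S. if P b then (a::complex) else 0) = (if (\<forall>b\<in>S. P b) then a ^ card S else 0)"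
  using assms by (induction S rule: finite_induct) auto

lemma f_fourier: assumes n: "n \<ge> 1" and P: "partition_on {1..p} \<pi>"
  shows "f_pi n p \<pi> (fourier n x) = complex_of_real (real n ^ card \<pi> / sqrt (real n) ^ p) * g_pi n p \<pi> x"
proof -
  define A where "A = {i\<in>multi_indices n p. idx_in i \<pi>}"
  define M where "M = multi_indices n p"
  have U: "\<Union>\<pi> = {1..p}" using partition_onD1[OF P] by simp
  have fin\<pi>: "finite \<pi>" using U by (metis finite_UnionD finite_atLeastAtMost)
  have finb: "\<And>\<beta>. \<beta> \<in> \<pi> \<Longrightarrow> finite \<beta>" using U by (metis Union_upper finite_atLeastAtMost finite_subset)
  have finM: "finite M" unfolding M_def multi_indices_def by (simp add: finite_PiE)
  have finA: "finite A" using finM unfolding A_def M_def by simp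
  have M': "M = PiE {1..p} (\<lambda>_. {..<n})" unfolding M_def multi_indices_def by (simp add: atLeast0LessThan)
  have "f_pi n p \<pi> (fourier n x) = (\<Sum>i\<in>A. (\<Prod>r\<in>{1..p}. \<Sum>l<n. ee n (int (i r) * int l) * x l) / sq n ^ p)"
    unfolding f_pi_def A_def fourier_ee by (simp add: prod_dividef)
  also have "\<dots> = (\<Sum>i\<in>A. \<Sum>L\<in>M. (\<Prod>r\<in>{1..p}. ee n (int (i r) * int (L r)) * x (L r))) / sq n ^ p"
    unfolding M' by (simp add: prod_sum_PiE sum_divide_distrib)
  also have "\<dots> = (\<Sum>L\<in>M. (\<Prod>r\<in>{1..p}. x (L r)) * (\<Sum>i\<in>A. \<Prod>r\<in>{1..p}. ee n (int (i r) * int (L r)))) / sq n ^ p"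
    by (subst sum.swap) (simp add: sum_distrib_left prod.distrib mult_ac)
  also have "\<dots> = (\<Sum>L\<in>M. (\<Prod>r\<in>{1..p}. x (L r)) * (if idx_vdash n L \<pi> then of_nat n ^ card \<pi> else 0)) / sq n ^ p"
  proof (intro arg_cong2[where f="(/)"] sum.cong refl arg_cong2[where f="(*)"])
    fix L assume "L \<in> M"
    have "(\<Sum>i\<in>A. \<Prod>r\<in>{1..p}. ee n (int (i r) * int (L r))) = (\<Prod>\<beta>\<in>\<pi>. \<Sum>c<n. \<Prod>r\<in>\<beta>. ee n (int c * int (L r)))"
      unfolding A_def by (rule factor_in[OF P])
    also have "\<dots> = (\<Prod>\<beta>\<in>\<pi>. \<Sum>c<n. ee n (int c * (\<Sum>r\<in>\<beta>. int (L r))))"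
      using finb by (intro prod.cong refl sum.cong) (simp_all add: prod_ee sum_distrib_left)
    also have "\<dots> = (\<Prod>\<beta>\<in>\<pi>. if int n dvd (\<Sum>r\<in>\<beta>. int (L r)) then of_nat n else 0)"
      using n by (simp add: ee_sum)
    also have "\<dots> = (if (\<forall>\<beta>\<in>\<pi>. int n dvd (\<Sum>r\<in>\<beta>. int (L r))) then of_nat n ^ card \<pi> else 0)"
      by (rule prod_if_const[OF fin\<pi>])
    also have "(\<forall>\<beta>\<in>\<pi>. int n dvd (\<Sum>r\<in>\<beta>. int (L r))) = idx_vdash n L \<pi>"
      unfolding idx_vdash_def by (simp add: of_nat_sum[symmetric] int_dvd_int_iff dvd_eq_mod_eq_0[symmetric] del: of_nat_sum)
    finally show "(\<Sum>i\<in>A. \<Prod>r\<in>{1..p}. ee n (int (i r) * int (L r))) = (if idx_vdash n L \<pi> then of_nat n ^ card \<pi> else 0)" .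
  qed
  also have "\<dots> = of_nat n ^ card \<pi> / sq n ^ p * g_pi n p \<pi> x"
    unfolding g_pi_def M_def using finM[unfolded M_def]
    by (simp add: sum.inter_filter[symmetric] sum_distrib_left sum_divide_distrib if_distrib mult_ac cong: if_cong)
  also have "of_nat n ^ card \<pi> / sq n ^ p = complex_of_real (real n ^ card \<pi> / sqrt (real n) ^ p)"
    by simp
  finally show ?thesis .
qed


lemma mi_lt: "i \<in> multi_indices n p \<Longrightarrow> r \<in> {1..p} \<Longrightarrow> i r < n"
  unfolding multi_indices_def by (auto simp: PiE_iff)

lemma f_cong: "(\<And>k. k < n \<Longrightarrow> x k = y k) \<Longrightarrow> f_pi n p \<pi> x = f_pi n p \<pi> y"
  unfolding f_pi_def by (intro sum.cong refl prod.cong) (auto dest: mi_lt)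

lemma g_cong: "(\<And>k. k < n \<Longrightarrow> x k = y k) \<Longrightarrow> g_pi n p \<pi> x = g_pi n p \<pi> y"
  unfolding g_pi_def by (intro sum.cong refl prod.cong) (auto dest: mi_lt)

lemma neg_mem: assumes n: "n \<ge> 1" and P: "partition_on {1..p} \<pi>"
  and i: "i \<in> {i \<in> multi_indices n p. idx_in i \<pi>}"
  shows "(\<lambda>r\<in>{1..p}. (n - i r) mod n) \<in> {i \<in> multi_indices n p. idx_in i \<pi>}"
proof -
  have "(\<lambda>r\<in>{1..p}. (n - i r) mod n) \<in> multi_indices n p"
    unfolding multi_indices_def
  proof (rule PiE_I)
    fix r assume "r \<in> {1..p}"
    thus "(\<lambda>r\<in>{1..p}. (n - i r) mod n) r \<in> {0..<n}" using n by simp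
  qed auto
  moreover have "idx_in (\<lambda>r\<in>{1..p}. (n - i r) mod n) \<pi>"
    unfolding idx_in_def
  proof (intro ballI)
    fix \<beta> a b assume b: "\<beta> \<in> \<pi>" "a \<in> \<beta>" "b \<in> \<beta>"
    have sub: "\<beta> \<subseteq> {1..p}" using partition_onD1[OF P] b(1) by blast
    have "i a = i b" using i b unfolding idx_in_def by blast
    thus "(\<lambda>r\<in>{1..p}. (n - i r) mod n) a = (\<lambda>r\<in>{1..p}. (n - i r) mod n) b"
      using sub b by auto
  qed
  ultimately show ?thesis by simp
qed

lemma neg_back: assumes n: "n \<ge> 1" and i: "i \<in> {i \<in> multi_indices n p. idx_in i \<pi>}"
  shows "(\<lambda>r\<in>{1..p}. (n - (\<lambda>r\<in>{1..p}. (n - i r) mod n) r) mod n) = i"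
proof (rule ext)
  have inv: "(n - (n - a) mod n) mod n = a" if "a < n" for a
    using refl_inv[of 0 n a] that n by simp
  fix r show "(\<lambda>r\<in>{1..p}. (n - (\<lambda>r\<in>{1..p}. (n - i r) mod n) r) mod n) r = i r"
  proof (cases "r \<in> {1..p}")
    case True
    hence "i r < n" using mi_lt[of i n p r] i by simp
    thus ?thesis using True inv by simp
  next
    case False
    have "i \<in> extensional {1..p}" using i unfolding multi_indices_def by (simp add: PiE_def)
    thus ?thesis using False by (auto simp: extensional_def)
  qed
qed

lemma f_neg: assumes n: "n \<ge> 1" and P: "partition_on {1..p} \<pi>"
  shows "f_pi n p \<pi> (\<lambda>k. x ((n - k) mod n)) = f_pi n p \<pi> x"
  unfolding f_pi_def
  by (rule sum.reindex_bij_witness[where i="\<lambda>i. \<lambda>r\<in>{1..p}. (n - i r) mod n"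
      and j="\<lambda>i. \<lambda>r\<in>{1..p}. (n - i r) mod n"])
     (simp_all only: neg_back[OF n] neg_mem[OF n P], auto)

lemma dual_X: assumes n: "n \<ge> 1" and H: "H \<in> X_set n p"
  shows "duality_map n H \<in> X_set n p"
proof -
  have Hh: "H \<in> circ_hadamard n" and Hr: "\<forall>\<pi>\<in>set_partitions p. f_pi n p \<pi> (\<lambda>k. H 0 k) \<in> \<real> \<and> g_pi n p \<pi> (\<lambda>k. H 0 k) \<in> \<real>"
    using H unfolding X_set_def by auto
  obtain x where x: "H = circ_matrix n x" "unimod n x" "orth n x" using had_E[OF n Hh] by blast
  have D: "duality_map n H = circ_matrix n (fourier n x)" using dual_circ[OF n] x(1) by simp
  have row: "(\<lambda>k. H 0 k) k = x k" if "k < n" for k using circ_row0[OF n that] x(1) by simp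
  have drow: "(\<lambda>k. duality_map n H 0 k) k = fourier n x k" if "k < n" for k using circ_row0[OF n that] D by simp
  have "\<forall>\<pi>\<in>set_partitions p. f_pi n p \<pi> (\<lambda>k. duality_map n H 0 k) \<in> \<real> \<and> g_pi n p \<pi> (\<lambda>k. duality_map n H 0 k) \<in> \<real>"
  proof
    fix \<pi> assume \<pi>: "\<pi> \<in> set_partitions p"
    hence P: "partition_on {1..p} \<pi>" unfolding set_partitions_def by simp
    define c where "c = complex_of_real (real n ^ card \<pi> / sqrt (real n) ^ p)"
    have cR: "c \<in> \<real>" unfolding c_def by simp
    have cnz: "c \<noteq> 0" unfolding c_def using n by simp
    have fx: "f_pi n p \<pi> x \<in> \<real>" "g_pi n p \<pi> x \<in> \<real>"
      using Hr \<pi> f_cong[of n "\<lambda>k. H 0 k" x] g_cong[of n "\<lambda>k. H 0 k" x] row by auto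
    have "f_pi n p \<pi> (\<lambda>k. duality_map n H 0 k) = f_pi n p \<pi> (fourier n x)"
      by (rule f_cong) (rule drow)
    also have "\<dots> = c * g_pi n p \<pi> x" unfolding c_def by (rule f_fourier[OF n P])
    finally have 1: "f_pi n p \<pi> (\<lambda>k. duality_map n H 0 k) \<in> \<real>" using cR fx by simp
    have "c * g_pi n p \<pi> (fourier n x) = f_pi n p \<pi> (fourier n (fourier n x))"
      unfolding c_def by (rule f_fourier[OF n P, symmetric])
    also have "\<dots> = f_pi n p \<pi> (\<lambda>k. x ((n - k) mod n))"
      by (rule f_cong) (rule FF[OF n])
    also have "\<dots> = f_pi n p \<pi> x" by (rule f_neg[OF n P])
    finally have "g_pi n p \<pi> (fourier n x) = f_pi n p \<pi> x / c" using cnz by (simp add: field_simps)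
    hence "g_pi n p \<pi> (fourier n x) \<in> \<real>" using cR fx by simp
    moreover have "g_pi n p \<pi> (\<lambda>k. duality_map n H 0 k) = g_pi n p \<pi> (fourier n x)"
      by (rule g_cong) (rule drow)
    ultimately show "f_pi n p \<pi> (\<lambda>k. duality_map n H 0 k) \<in> \<real> \<and> g_pi n p \<pi> (\<lambda>k. duality_map n H 0 k) \<in> \<real>"
      using 1 by simp
  qed
  moreover have "duality_map n H \<in> circ_hadamard n" by (rule dual_had[OF n Hh])
  ultimately show ?thesis unfolding X_set_def by simp
qed

theorem proposition3p4:
  fixes n p :: nat
  assumes "n \<ge> 1"
  shows "bij_betw (duality_map n) (X_set n p) (X_set n p)"
proof (rule bij_betw_byWitness[where f'="\<lambda>H. duality_map n (duality_map n (duality_map n H))"])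
  have X: "\<And>H. H \<in> X_set n p \<Longrightarrow> duality_map n H \<in> X_set n p" by (rule dual_X[OF assms])
  have h: "\<And>H. H \<in> X_set n p \<Longrightarrow> H \<in> circ_hadamard n" unfolding X_set_def by simp
  show "\<forall>a\<in>X_set n p. duality_map n (duality_map n (duality_map n (duality_map n a))) = a"
    using dual4[OF assms] h by blast
  show "\<forall>a\<in>X_set n p. duality_map n (duality_map n (duality_map n (duality_map n a))) = a"
    using dual4[OF assms] h by blast
  show "duality_map n ` X_set n p \<subseteq> X_set n p" using X by blast
  show "(\<lambda>H. duality_map n (duality_map n (duality_map n H))) ` X_set n p \<subseteq> X_set n p" using X by blast
qed

end
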